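(* Let $(\mathbb E;B,Q;M)$ be a metric double vector bundle with core $Q^*$, and let $D\subseteq\mathbb E$ be a double vector subbundle with sides $B'\subseteq B$, $U\subseteq Q$ and core $K\subseteq Q^*$. Let $\Sigma\colon B\times_MQ\to\mathbb E$ be a linear splitting adapted to $D$, i.e. $\Sigma(B'\times_MU)\subseteq D$, and let $\Lambda$ be the symmetric form defined by $\Sigma$. Then the double subbundle $D\to B'$ is isotropic if and only if $K\subseteq U^\circ$ and $\Lambda(u_1,u_2)\in(B')^\circ$ for all $m\in M$ and $u_1,u_2\in U_m$.
   Context: A double vector bundle $(\mathbb E;B,Q;M)$ with core $Q^*$: $\mathbb E$ carries vector bundle structures over $B$ and over $Q$ (with $B,Q\to M$) which commute; the core is the intersection of the kernels of the two projections, a vector bundle over $M$. A linear splitting $\Sigma\colon B\times_MQ\to\mathbb E$ is a double vector bundle embedding inducing the identity on $B$ and $Q$; it yields an identification $\mathbb E\cong B\times_MQ\times_MQ^*$ (with $(b,q,\tau)+_B(b,q',\tau')=(b,q+q',\tau+\tau')$ and $(b,q,\tau)+_Q(b',q,\tau')=(b+b',q,\tau+\tau')$), horizontal lifts $\sigma_Q(q)(b_m)=\Sigma(b_m,q(m))$ and core sections $\tau^\dagger(b_m)=(b_m,0,\tau(m))$ of $\mathbb E\to B$. The double vector bundle is metric if $\mathbb E\to B$ carries a symmetric fibrewise nondegenerate pairing with $\langle\tau_1^\dagger,\tau_2^\dagger\rangle=0$, $\langle\chi,\tau^\dagger\rangle=q_B^*\langle q,\tau\rangle$ for any linear section $\chi$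 over $q\in\Gamma(Q)$, and $\langle\chi_1,\chi_2\rangle$ fibrewise linear on $B$ for linear sections. The form $\Lambda$, a symmetric bilinear bundle map $Q\times_MQ\to B^*$, is defined by $\langle\sigma_Q(q_1),\sigma_Q(q_2)\rangle=\ell_{\Lambda(q_1,q_2)}$, where $\ell_\beta\colon B\to\mathbb R$ is the linear function of $\beta\in\Gamma(B^* )$; equivalently $\langle(b,q_1,\tau_1),(b,q_2,\tau_2)\rangle=\langle\Lambda(q_1,q_2),b\rangle+\langle q_1,\tau_2\rangle+\langle q_2,\tau_1\rangle$. A double vector subbundle with sides $B',U$ and core $K$ adapted to $\Sigma$ corresponds to $B'\times_MU\times_MK$. $D\to B'$ is isotropic if $\langle d_1,d_2\rangle=0$ for $d_1,d_2\in D$ in the same fibre over $B'$. $U^\circ\subseteq Q^*$ and $(B')^\circ\subseteq B^*$ are annihilators. *)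

theory Defs
  imports "HOL-Analysis.Analysis"
begin

text \<open>Fibrewise model of a double vector bundle decomposed by a linear splitting.
  Fibres of B and Q over a point m are finite-dimensional subspaces B m, Q m of
  real vector spaces; the fibre of the dual bundle is the space of linear
  functionals on the fibre (extended by 0 outside, to make them unique).\<close>

definition fib_lin :: "'a::real_vector set \<Rightarrow> ('a \<Rightarrow> real) \<Rightarrow> bool" where
  "fib_lin S f \<longleftrightarrow> (\<forall>x\<in>S. \<forall>y\<in>S. f (x + y) = f x + f y) \<and> (\<forall>x\<in>S. \<forall>c. f (c *\<^sub>R x) = c * f x)"

definition dual_fibre :: "'a::real_vector set \<Rightarrow> ('a \<Rightarrow> real) set" where
  "dual_fibre S = {f. fib_lin S f \<and> (\<forall>x. x \<notin> S \<longrightarrow> f x = 0)}"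

definition fd_subspace :: "'a::real_vector set \<Rightarrow> bool" where
  "fd_subspace S \<longleftrightarrow> subspace S \<and> (\<exists>T. finite T \<and> span T = S)"

definition dual_subspace :: "'a::real_vector set \<Rightarrow> ('a \<Rightarrow> real) set \<Rightarrow> bool" where
  "dual_subspace S K \<longleftrightarrow> K \<subseteq> dual_fibre S \<and> (\<lambda>_. 0) \<in> K \<and>
     (\<forall>f\<in>K. \<forall>g\<in>K. (\<lambda>x. f x + g x) \<in> K) \<and> (\<forall>f\<in>K. \<forall>c. (\<lambda>x. c * f x) \<in> K)"

definition annihilator :: "'a::real_vector set \<Rightarrow> 'a set \<Rightarrow> ('a \<Rightarrow> real) set" where
  "annihilator S W = {f \<in> dual_fibre S. \<forall>w\<in>W. f w = 0}"

text \<open>Fibre over m of the double vector bundle E = B x_M Q x_M Q^* (via the splitting).\<close>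
definition dvb_fibre :: "('m \<Rightarrow> 'b::real_vector set) \<Rightarrow> ('m \<Rightarrow> 'q::real_vector set) \<Rightarrow> 'm
    \<Rightarrow> ('b \<times> 'q \<times> ('q \<Rightarrow> real)) set" where
  "dvb_fibre B Q m = {(b, q, t). b \<in> B m \<and> q \<in> Q m \<and> t \<in> dual_fibre (Q m)}"

text \<open>Double vector subbundle with sides B', U and core K adapted to the splitting:
  B' x_M U x_M K.\<close>
definition sub_dvb_fibre :: "('m \<Rightarrow> 'b::real_vector set) \<Rightarrow> ('m \<Rightarrow> 'q::real_vector set)
    \<Rightarrow> ('m \<Rightarrow> ('q \<Rightarrow> real) set) \<Rightarrow> 'm \<Rightarrow> ('b \<times> 'q \<times> ('q \<Rightarrow> real)) set" where
  "sub_dvb_fibre B' U K m = {(b, u, k). b \<in> B' m \<and> u \<in> U m \<and> k \<in> K m}"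

text \<open>D \<rightarrow> B' is isotropic: elements of D in the same fibre over B' pair to zero.
  The first component of a triple is its base point in B.\<close>
definition isotropic_over_side ::
  "('m \<Rightarrow> ('b \<times> 'q \<times> ('q \<Rightarrow> real)) \<Rightarrow> ('b \<times> 'q \<times> ('q \<Rightarrow> real)) \<Rightarrow> real)
   \<Rightarrow> ('m \<Rightarrow> ('b \<times> 'q \<times> ('q \<Rightarrow> real)) set) \<Rightarrow> bool" where
  "isotropic_over_side g D \<longleftrightarrow>
     (\<forall>m. \<forall>d1\<in>D m. \<forall>d2\<in>D m. fst d1 = fst d2 \<longrightarrow> g m d1 d2 = 0)"

end

theory Submission
  imports Defs
begin

theorem proposition5p1:
  fixes B B' :: "'m \<Rightarrow> 'b::real_vector set"
    and Q U :: "'m \<Rightarrow> 'q::real_vector set"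
    and K :: "'m \<Rightarrow> ('q \<Rightarrow> real) set"
    and \<Lambda> :: "'m \<Rightarrow> 'q \<Rightarrow> 'q \<Rightarrow> 'b \<Rightarrow> real"
    and g :: "'m \<Rightarrow> ('b \<times> 'q \<times> ('q \<Rightarrow> real)) \<Rightarrow> ('b \<times> 'q \<times> ('q \<Rightarrow> real)) \<Rightarrow> real"
  assumes B: "\<And>m. fd_subspace (B m)"
    and Q: "\<And>m. fd_subspace (Q m)"
    and B'sub: "\<And>m. subspace (B' m) \<and> B' m \<subseteq> B m"
    and Usub: "\<And>m. subspace (U m) \<and> U m \<subseteq> Q m"
    and Ksub: "\<And>m. dual_subspace (Q m) (K m)"
    and Lambda_dual: "\<And>m q1 q2. q1 \<in> Q m \<Longrightarrow> q2 \<in> Q m \<Longrightarrow> \<Lambda> m q1 q2 \<in> dual_fibre (B m)"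
    and Lambda_sym: "\<And>m q1 q2. q1 \<in> Q m \<Longrightarrow> q2 \<in> Q m \<Longrightarrow> \<Lambda> m q1 q2 = \<Lambda> m q2 q1"
    and Lambda_lin: "\<And>m q2 b. q2 \<in> Q m \<Longrightarrow> fib_lin (Q m) (\<lambda>q1. \<Lambda> m q1 q2 b)"
    and metric: "\<And>m b q1 q2 t1 t2. (b, q1, t1) \<in> dvb_fibre B Q m \<Longrightarrow> (b, q2, t2) \<in> dvb_fibre B Q m \<Longrightarrow>
        g m (b, q1, t1) (b, q2, t2) = \<Lambda> m q1 q2 b + t2 q1 + t1 q2"
  shows "isotropic_over_side g (sub_dvb_fibre B' U K) \<longleftrightarrow>
         (\<forall>m. K m \<subseteq> annihilator (Q m) (U m)) \<and>
         (\<forall>m. \<forall>u1\<in>U m. \<forall>u2\<in>U m. \<Lambda> m u1 u2 \<in> annihilator (B m) (B' m))"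
proof -
  have z0: "(\<lambda>_. 0) \<in> dual_fibre (Q m)" for m
    using Ksub[of m] unfolding dual_subspace_def by blast
  have Kd: "K m \<subseteq> dual_fibre (Q m)" for m
    using Ksub[of m] unfolding dual_subspace_def by blast
  have z0K: "(\<lambda>_. 0) \<in> K m" for m
    using Ksub[of m] unfolding dual_subspace_def by blast
  have L0: "\<Lambda> m u 0 b = 0" if "u \<in> Q m" for m u b
  proof -
    have "0 \<in> Q m" using Q[of m] unfolding fd_subspace_def subspace_def by blast
    have "\<Lambda> m 0 u b = \<Lambda> m ((0::real) *\<^sub>R u) u b" by simp
    also have "\<dots> = 0 * \<Lambda> m u u b" using Lambda_lin[OF that, of b] that
      unfolding fib_lin_def by blast
    finally show ?thesis using Lambda_sym[OF that \<open>0 \<in> Q m\<close>] by simp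
  qed
  have B0: "0 \<in> B' m" for m using B'sub[of m] unfolding subspace_def by blast
  have U0: "0 \<in> U m" for m using Usub[of m] unfolding subspace_def by blast
  have UQ: "u \<in> U m \<Longrightarrow> u \<in> Q m" for m u using Usub[of m] by blast
  have BB: "b \<in> B' m \<Longrightarrow> b \<in> B m" for m b using B'sub[of m] by blast
  have gform: "g m (b, u1, k1) (b, u2, k2) = \<Lambda> m u1 u2 b + k2 u1 + k1 u2"
    if "b \<in> B' m" "u1 \<in> U m" "u2 \<in> U m" "k1 \<in> K m" "k2 \<in> K m" for m b u1 u2 k1 k2
    apply (rule metric) using that BB UQ Kd unfolding dvb_fibre_def by blast+
  show ?thesis
  proof
    assume iso: "isotropic_over_side g (sub_dvb_fibre B' U K)"
    have iso': "g m (b, u1, k1) (b, u2, k2) = 0"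
      if "b \<in> B' m" "u1 \<in> U m" "u2 \<in> U m" "k1 \<in> K m" "k2 \<in> K m" for m b u1 u2 k1 k2
      using iso that unfolding isotropic_over_side_def sub_dvb_fibre_def by fastforce
    have A: "K m \<subseteq> annihilator (Q m) (U m)" for m
    proof
      fix k assume k: "k \<in> K m"
      have "k u = 0" if u: "u \<in> U m" for u
        using iso'[OF B0 u U0 z0K k] gform[OF B0 u U0 z0K k] L0[OF UQ[OF u]] by simp
      then show "k \<in> annihilator (Q m) (U m)" using k Kd unfolding annihilator_def by blast
    qed
    have C: "\<Lambda> m u1 u2 \<in> annihilator (B m) (B' m)" if "u1 \<in> U m" "u2 \<in> U m" for m u1 u2
    proof -
      have "\<Lambda> m u1 u2 b = 0" if b: "b \<in> B' m" for b
        using iso'[OF b \<open>u1 \<in> U m\<close> \<open>u2 \<in> U m\<close> z0K z0K] gform[OF b \<open>u1 \<in> U m\<close> \<open>u2 \<in> U m\<close> z0K z0K] by simp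
      then show ?thesis using Lambda_dual[OF UQ UQ] that unfolding annihilator_def by blast
    qed
    show "(\<forall>m. K m \<subseteq> annihilator (Q m) (U m)) \<and>
         (\<forall>m. \<forall>u1\<in>U m. \<forall>u2\<in>U m. \<Lambda> m u1 u2 \<in> annihilator (B m) (B' m))"
      using A C by blast
  next
    assume H: "(\<forall>m. K m \<subseteq> annihilator (Q m) (U m)) \<and>
         (\<forall>m. \<forall>u1\<in>U m. \<forall>u2\<in>U m. \<Lambda> m u1 u2 \<in> annihilator (B m) (B' m))"
    show "isotropic_over_side g (sub_dvb_fibre B' U K)"
      unfolding isotropic_over_side_def
    proof (intro allI ballI impI)
      fix m d1 d2 assume d1: "d1 \<in> sub_dvb_fibre B' U K m" and d2: "d2 \<in> sub_dvb_fibre B' U K m"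
        and e: "fst d1 = fst d2"
      obtain b u1 k1 where 1: "d1 = (b, u1, k1)" "b \<in> B' m" "u1 \<in> U m" "k1 \<in> K m"
        using d1 unfolding sub_dvb_fibre_def by auto
      obtain u2 k2 where 2: "d2 = (b, u2, k2)" "u2 \<in> U m" "k2 \<in> K m"
        using d2 e 1(1) unfolding sub_dvb_fibre_def by auto
      have "k2 u1 = 0" "k1 u2 = 0" using H 1 2 unfolding annihilator_def by blast+
      moreover have "\<Lambda> m u1 u2 b = 0" using H 1 2 unfolding annihilator_def by blast
      ultimately show "g m d1 d2 = 0" using gform[OF 1(2,3) 2(2) 1(4) 2(3)] 1(1) 2(1) by simp
    qed
  qed
qed

end
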